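(* Let $P\in\mathbb{R}^{n\times n}$ be a symmetric matrix with $\operatorname{rank}(P)=K$. Suppose $V\in\mathbb{R}^{n\times K}$ satisfies the following three conditions: (i) (Eigenbasis) $V$ is a basis of the column space of $P$, i.e. $V$ has full column rank $K$ and $P=VU^\top$ for some $U\in\mathbb{R}^{n\times K}$; (ii) (Non-negativity) $V_{ik}\ge 0$ for all $i\in[n]$, $k\in[K]$; (iii) (Pure rows) for each $k=1,\dots,K$ there is a row index $i_k$ with $V_{i_k k}>0$ and $V_{i_k j}=0$ for all $j\neq k$. If $\widetilde V\in\mathbb{R}^{n\times K}$ also satisfies (i)–(iii) (with the same $P$), then there exists a permutation matrix $Q\in\{0,1\}^{K\times K}$ such that $\operatorname{supp}(V)=\operatorname{supp}(\widetilde V Q)$.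
   Context: For a matrix $M$, $\operatorname{supp}(M)=\{(i,j): M_{ij}\neq 0\}$ denotes the set of its non-zero entries. $[n]=\{1,\dots,n\}$. *)

theory Defs
  imports "HOL-Analysis.Analysis"
begin

definition supp_mat :: "real^'m^'n \<Rightarrow> ('n \<times> 'm) set" where
  "supp_mat M = {(i, j). M $ i $ j \<noteq> 0}"

definition permutation_matrix :: "real^'k^'k \<Rightarrow> bool" where
  "permutation_matrix Q \<longleftrightarrow>
     (\<forall>i j. Q $ i $ j = 0 \<or> Q $ i $ j = 1) \<and>
     (\<forall>i. \<exists>!j. Q $ i $ j = 1) \<and>
     (\<forall>j. \<exists>!i. Q $ i $ j = 1)"

definition admissible_basis :: "real^'n^'n \<Rightarrow> real^'k^'n \<Rightarrow> bool" where
  "admissible_basis P V \<longleftrightarrow>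
     rank V = CARD('k) \<and> (\<exists>U :: real^'k^'n. P = V ** transpose U) \<and>
     (\<forall>i k. V $ i $ k \<ge> 0) \<and>
     (\<forall>k. \<exists>i. V $ i $ k > 0 \<and> (\<forall>j. j \<noteq> k \<longrightarrow> V $ i $ j = 0))"

end

theory Submission
  imports Defs
begin

lemma mm_comp: "((A::real^'k^'n) ** B) $ i $ j = (\<Sum>k\<in>UNIV. A $ i $ k * B $ k $ j)"
  by (simp add: matrix_matrix_mult_def)

lemma mat1_comp: "(mat 1 :: real^'k^'k) $ i $ j = (if i = j then 1 else 0)"
  by (simp add: mat_def)

lemma monomial_rows:
  fixes A B :: "real^'k^'k"
  assumes A0: "\<forall>i j. A $ i $ j \<ge> 0" and B0: "\<forall>i j. B $ i $ j \<ge> 0"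
    and AB: "A ** B = mat 1" and BA: "B ** A = mat 1"
  shows "\<forall>i. \<exists>!k. A $ i $ k > 0" "\<forall>k. \<exists>!i. A $ i $ k > 0"
proof -
  have nz: "\<exists>k. X $ i $ k * Y $ k $ i \<noteq> 0" if "X ** Y = mat 1" for X Y :: "real^'k^'k" and i
  proof (rule ccontr)
    assume "\<not> ?thesis"
    then have "(X ** Y) $ i $ i = 0" by (simp add: mm_comp sum.neutral)
    with that show False by (simp add: mat1_comp)
  qed
  have F: "B $ k $ j = 0" if "A $ i $ k > 0" "j \<noteq> i" for i k j
  proof -
    have "(\<Sum>m\<in>UNIV. A $ i $ m * B $ m $ j) = 0" using AB that(2) mm_comp[of A B i j]
      by (simp add: mat1_comp)
    then have "A $ i $ k * B $ k $ j = 0"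
      using sum_nonneg_eq_0_iff[of UNIV "\<lambda>m. A $ i $ m * B $ m $ j"] A0 B0 by simp
    with that(1) show ?thesis by simp
  qed
  have G: "B $ k $ i > 0" if "A $ i $ k > 0" for i k
  proof -
    obtain m where m: "B $ k $ m * A $ m $ k \<noteq> 0" using nz[OF BA, of k] by blast
    then have "m = i" using F[OF that] by fastforce
    with m B0 show ?thesis by (metis less_eq_real_def mult_zero_left)
  qed
  show "\<forall>i. \<exists>!k. A $ i $ k > 0"
  proof
    fix i
    obtain k where k: "A $ i $ k * B $ k $ i \<noteq> 0" using nz[OF AB, of i] by blast
    then have ex: "A $ i $ k > 0" using A0 by (metis less_eq_real_def mult_zero_left)
    show "\<exists>!k. A $ i $ k > 0"
    proof (rule ex1I[of _ k])
      show "A $ i $ k > 0" by (rule ex)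
      fix k' assume k': "A $ i $ k' > 0"
      show "k' = k"
      proof (rule ccontr)
        assume ne: "k' \<noteq> k"
        have "(\<Sum>m\<in>UNIV. B $ k $ m * A $ m $ k') = 0" using BA ne mm_comp[of B A k k']
          by (simp add: mat1_comp)
        then have "B $ k $ i * A $ i $ k' = 0"
          using sum_nonneg_eq_0_iff[of UNIV "\<lambda>m. B $ k $ m * A $ m $ k'"] A0 B0 by simp
        with G[OF ex] k' show False by simp
      qed
    qed
  qed
  show "\<forall>k. \<exists>!i. A $ i $ k > 0"
  proof
    fix k
    obtain m where m: "B $ k $ m * A $ m $ k \<noteq> 0" using nz[OF BA, of k] by blast
    then have ex: "A $ m $ k > 0" using A0 by (metis less_eq_real_def mult_zero_right)
    show "\<exists>!i. A $ i $ k > 0"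
    proof (rule ex1I[of _ m])
      show "A $ m $ k > 0" by (rule ex)
      fix i assume i: "A $ i $ k > 0"
      show "i = m"
      proof (rule ccontr)
        assume "i \<noteq> m"
        then have "B $ k $ m = 0" using F[OF i] by simp
        with G[OF ex] show False by simp
      qed
    qed
  qed
qed

lemma range_eq:
  fixes P :: "real^'n^'n" and V :: "real^'k^'n"
  assumes "rank P = CARD('k)" "admissible_basis P V"
  shows "range (\<lambda>x. V *v x) = range (\<lambda>x. P *v x)"
proof -
  obtain U :: "real^'k^'n" where U: "P = V ** transpose U" and r: "rank V = CARD('k)"
    using assms(2) unfolding admissible_basis_def by blast
  have sub: "range (\<lambda>x. P *v x) \<subseteq> range (\<lambda>x. V *v x)"
    using U by (auto simp: matrix_vector_mul_assoc[symmetric])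
  have "subspace (range (\<lambda>x. P *v x))" "subspace (range (\<lambda>x. V *v x))"
    by (auto intro!: linear_subspace_image[OF matrix_vector_mul_linear] subspace_UNIV)
  then show ?thesis
    using subspace_dim_equal[OF _ _ sub] assms(1) r by (simp add: rank_dim_range)
qed

lemma factor:
  fixes V Vt :: "real^'k^'n"
  assumes "range (\<lambda>x. Vt *v x) \<subseteq> range (\<lambda>x. V *v x)"
  shows "\<exists>A. Vt = V ** A"
proof -
  have "\<forall>k. \<exists>x. Vt *v axis k 1 = V *v x" using assms by blast
  then obtain x where x: "\<And>k. Vt *v axis k 1 = V *v x k" by metis
  define A :: "real^'k^'k" where "A = (\<chi> i k. x k $ i)"
  have "Vt = V ** A"
  proof (subst vec_eq_iff, intro allI, subst vec_eq_iff, intro allI)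
    fix r k
    have "Vt $ r $ k = (Vt *v axis k 1) $ r"
      by (simp add: matrix_vector_mult_basis column_def)
    also have "\<dots> = (V *v x k) $ r" by (simp add: x)
    also have "\<dots> = (V ** A) $ r $ k"
      by (simp add: matrix_vector_mult_def mm_comp A_def)
    finally show "Vt $ r $ k = (V ** A) $ r $ k" .
  qed
  then show ?thesis by blast
qed

lemma pure_inv:
  fixes V :: "real^'k^'n" and C :: "real^'k^'k"
  assumes "admissible_basis P V" "V ** C = V"
  shows "C = mat 1"
proof (subst vec_eq_iff, intro allI, subst vec_eq_iff, intro allI)
  fix k j
  obtain i where i: "V $ i $ k > 0" "\<forall>j. j \<noteq> k \<longrightarrow> V $ i $ j = 0"
    using assms(1) unfolding admissible_basis_def by blast
  have "(V ** C) $ i $ j = (\<Sum>m\<in>UNIV. V $ i $ m * C $ m $ j)" by (rule mm_comp)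
  also have "\<dots> = V $ i $ k * C $ k $ j"
    by (rule sum.remove[where x=k, THEN trans]) (use i in auto)
  finally have "V $ i $ k * C $ k $ j = V $ i $ j" using assms(2) by simp
  then show "C $ k $ j = mat 1 $ k $ j"
    using i by (cases "j = k") (auto simp: mat1_comp)
qed

lemma pure_nonneg:
  fixes V Vt :: "real^'k^'n" and A :: "real^'k^'k"
  assumes "admissible_basis P V" "admissible_basis P Vt" "Vt = V ** A"
  shows "A $ k $ j \<ge> 0"
proof -
  obtain i where i: "V $ i $ k > 0" "\<forall>j. j \<noteq> k \<longrightarrow> V $ i $ j = 0"
    using assms(1) unfolding admissible_basis_def by blast
  have "Vt $ i $ j = (\<Sum>m\<in>UNIV. V $ i $ m * A $ m $ j)" using assms(3) mm_comp by simp
  also have "\<dots> = V $ i $ k * A $ k $ j"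
    by (rule sum.remove[where x=k, THEN trans]) (use i in auto)
  finally have "V $ i $ k * A $ k $ j \<ge> 0" using assms(2) unfolding admissible_basis_def by metis
  with i show ?thesis by (simp add: zero_le_mult_iff)
qed

theorem proposition1:
  fixes P :: "real^'n^'n" and V Vt :: "real^'k^'n"
  assumes "transpose P = P"
    and "rank P = CARD('k)"
    and "admissible_basis P V"
    and "admissible_basis P Vt"
  shows "\<exists>Q :: real^'k^'k. permutation_matrix Q \<and> supp_mat V = supp_mat (Vt ** Q)"
proof -
  have R: "range (\<lambda>x. V *v x) = range (\<lambda>x. Vt *v x)"
    using range_eq[OF assms(2,3)] range_eq[OF assms(2,4)] by simp
  obtain A where A: "Vt = V ** A" using factor[of Vt V] R by auto
  obtain B where B: "V = Vt ** B" using factor[of V Vt] R by auto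
  have A0: "\<forall>i j. A $ i $ j \<ge> 0" using pure_nonneg[OF assms(3,4) A] by blast
  have B0: "\<forall>i j. B $ i $ j \<ge> 0" using pure_nonneg[OF assms(4,3) B] by blast
  have AB: "A ** B = mat 1" using pure_inv[OF assms(3)] A B by (metis matrix_mul_assoc)
  have BA: "B ** A = mat 1" using pure_inv[OF assms(4)] A B by (metis matrix_mul_assoc)
  note M = monomial_rows[OF B0 A0 BA AB]
  define Q :: "real^'k^'k" where "Q = (\<chi> k j. if B $ k $ j > 0 then 1 else 0)"
  have "permutation_matrix Q"
    unfolding permutation_matrix_def Q_def using M by auto
  moreover have "supp_mat V = supp_mat (Vt ** Q)"
  proof -
    have Vt0: "\<forall>r k. Vt $ r $ k \<ge> 0" using assms(4) unfolding admissible_basis_def by blast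
    have "V $ r $ j \<noteq> 0 \<longleftrightarrow> (Vt ** Q) $ r $ j \<noteq> 0" for r j
    proof -
      have e1: "V $ r $ j = (\<Sum>k\<in>UNIV. Vt $ r $ k * B $ k $ j)" using B mm_comp by metis
      have e2: "(Vt ** Q) $ r $ j = (\<Sum>k\<in>UNIV. Vt $ r $ k * Q $ k $ j)" by (rule mm_comp)
      have "V $ r $ j \<noteq> 0 \<longleftrightarrow> (\<exists>k. Vt $ r $ k * B $ k $ j \<noteq> 0)"
        unfolding e1 using sum_nonneg_eq_0_iff[of UNIV "\<lambda>k. Vt $ r $ k * B $ k $ j"] Vt0 B0
        by simp
      moreover have "(Vt ** Q) $ r $ j \<noteq> 0 \<longleftrightarrow> (\<exists>k. Vt $ r $ k * Q $ k $ j \<noteq> 0)"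
        unfolding e2 using sum_nonneg_eq_0_iff[of UNIV "\<lambda>k. Vt $ r $ k * Q $ k $ j"] Vt0
        by (simp add: Q_def)
      moreover have "Vt $ r $ k * B $ k $ j \<noteq> 0 \<longleftrightarrow> Vt $ r $ k * Q $ k $ j \<noteq> 0" for k
        using B0 by (auto simp: Q_def less_eq_real_def)
      ultimately show ?thesis by simp
    qed
    then show ?thesis unfolding supp_mat_def by auto
  qed
  ultimately show ?thesis by blast
qed

end
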